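(* Let $K$ be a CMI in pure form. Then $K=(\cdot,\langle\ \rangle)$ (i.e., $K$ is degenerate) if and only if $\mathrm{can}(K)=(\cdot,\langle\ \rangle)$.
   Context: Setting: $X_1,\dots,X_n$ jointly distributed discrete random variables with $H(X_i)<\infty$; distribution unspecified. $X_\alpha=(X_i,i\in\alpha)$, $X_\emptyset$ constant. A CMI is $K=(C,\langle Q_1,\dots,Q_k\rangle)$, $k\ge0$, $C\subseteq\{1,\dots,n\}$, $\langle\cdot\rangle$ an unordered multiset of subsets; valid (for a given distribution) if $\sum_iH(X_{Q_i}|X_C)-H(X_{Q_1},\dots,X_{Q_k}|X_C)=0$. Empty members may be deleted. $K$ is degenerate if it is valid for every joint distribution; all degenerate CMIs are identified and written $(\cdot,\langle\ \rangle)$. Pure form: all $Q_i\ne\emptyset$ and $Q_i\cap C=\emptyset$. Canonical form of pure $K$: $\mathbb I_K$ = indices lying in at least two members (distinct positions) of the collection if $k\ge2$, else $\emptyset$; $P_1,\dots,P_t$ the nonempty sets among $Q_i\setminus\mathbb I_K$; $\mathrm{can}(K)=(\cdot,\langle\ \rangle)$ if $k\le1$; $(C,\langle\mathbb I_K,\mathbb I_K\rangle)$ if $k\ge2,\mathbb I_K\ne\emptyset,t\le1$; $(C,\langle P_1,\dots,P_t\rangle)$ if $k\ge2,\mathbb I_K=\emptyset$; $(C,\langle\mathbb I_K,\mathbb I_K,P_1,\dots,P_t\rangle)$ if $k\ge2,\mathbb I_K\ne\emptyset,t\ge2$. *)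

theory Defs
  imports "HOL-Probability.Probability" "HOL-Library.Multiset"
begin

text \<open>A joint distribution of discrete random variables X_1, ..., X_n is modelled as a
  probability mass function on assignments (index \<Rightarrow> value); values are taken in nat
  (any countable value set can be relabelled injectively into nat without changing entropies).
  Coordinates outside {1..n} are irrelevant.\<close>

type_synonym joint = "(nat \<Rightarrow> nat) pmf"

definition marg :: "joint \<Rightarrow> nat set \<Rightarrow> (nat \<Rightarrow> nat) pmf" where
  "marg p \<alpha> = map_pmf (\<lambda>x. restrict x \<alpha>) p"

definition entropy_pmf :: "'b pmf \<Rightarrow> real" where
  "entropy_pmf q = - (\<Sum>\<^sub>\<infinity>x. pmf q x * log 2 (pmf q x))"

definition finite_entropy :: "'b pmf \<Rightarrow> bool" where
  "finite_entropy q \<longleftrightarrow> (\<lambda>x. pmf q x * log 2 (pmf q x)) summable_on UNIV"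

definition H :: "joint \<Rightarrow> nat set \<Rightarrow> real" where
  "H p \<alpha> = entropy_pmf (marg p \<alpha>)"

definition Hc :: "joint \<Rightarrow> nat set \<Rightarrow> nat set \<Rightarrow> real" where
  "Hc p A C = H p (A \<union> C) - H p C"

text \<open>A CMI: conditioning set C and a multiset of index sets Q_1..Q_k.\<close>
type_synonym cmi = "nat set \<times> nat set multiset"

definition admissible :: "nat \<Rightarrow> joint \<Rightarrow> bool" where
  "admissible n p \<longleftrightarrow> (\<forall>i\<in>{1..n}. finite_entropy (marg p {i}))"

definition valid :: "joint \<Rightarrow> cmi \<Rightarrow> bool" where
  "valid p K \<longleftrightarrow>
     (let C = fst K; Qs = snd K in
       (\<Sum>Q\<in>#Qs. Hc p Q C) - Hc p (\<Union>Q\<in>set_mset Qs. Q) C = 0)"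

definition cmi_on :: "nat \<Rightarrow> cmi \<Rightarrow> bool" where
  "cmi_on n K \<longleftrightarrow> fst K \<subseteq> {1..n} \<and> (\<forall>Q\<in>#snd K. Q \<subseteq> {1..n})"

definition degenerate :: "nat \<Rightarrow> cmi \<Rightarrow> bool" where
  "degenerate n K \<longleftrightarrow> (\<forall>p. admissible n p \<longrightarrow> valid p K)"

definition pure :: "cmi \<Rightarrow> bool" where
  "pure K \<longleftrightarrow> (\<forall>Q\<in>#snd K. Q \<noteq> {} \<and> Q \<inter> fst K = {})"

definition IK :: "cmi \<Rightarrow> nat set" where
  "IK K = (if size (snd K) \<ge> 2
           then {i. size (filter_mset (\<lambda>Q. i \<in> Q) (snd K)) \<ge> 2} else {})"

definition PK :: "cmi \<Rightarrow> nat set multiset" where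
  "PK K = filter_mset (\<lambda>P. P \<noteq> {}) (image_mset (\<lambda>Q. Q - IK K) (snd K))"

text \<open>Canonical form; None represents the degenerate symbol (., < >).\<close>
definition can :: "cmi \<Rightarrow> cmi option" where
  "can K = (let C = fst K; I = IK K; P = PK K in
     if size (snd K) \<le> 1 then None
     else if I \<noteq> {} \<and> size P \<le> 1 then Some (C, {#I, I#})
     else if I = {} then Some (C, P)
     else Some (C, {#I, I#} + P))"

text \<open>Equality with the degenerate symbol (., < >): since all degenerate CMIs are
  identified with it, an element of cmi option equals it iff it is None or a degenerate CMI.\<close>
definition is_degenerate_symbol :: "nat \<Rightarrow> cmi option \<Rightarrow> bool" where
  "is_degenerate_symbol n K' \<longleftrightarrow> (case K' of None \<Rightarrow> True | Some K'' \<Rightarrow> degenerate n K'')"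

end

theory Submission
  imports Defs
begin

lemma ent_pmf_of_set:
  assumes "finite S" "S \<noteq> {}"
  shows "entropy_pmf (pmf_of_set S) = log 2 (card S)"
    and "finite_entropy (pmf_of_set S)"
proof -
  let ?f = "\<lambda>x. pmf (pmf_of_set S) x * log 2 (pmf (pmf_of_set S) x)"
  have z: "\<And>x. x \<notin> S \<Longrightarrow> ?f x = 0" using assms by simp
  have "?f summable_on S" using assms by simp
  then show "finite_entropy (pmf_of_set S)" unfolding finite_entropy_def
    using summable_on_cong_neutral[of S UNIV ?f ?f] z by auto
  have "infsum ?f UNIV = infsum ?f S"
    using infsum_cong_neutral[of S UNIV ?f ?f] z by auto
  also have "\<dots> = (\<Sum>x\<in>S. 1 / card S * log 2 (1 / card S))"
    using assms by simp
  also have "\<dots> = log 2 (1 / card S)" using assms by simp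
  also have "\<dots> = - log 2 (card S)" using assms
    by (simp add: log_divide card_gt_0_iff)
  finally show "entropy_pmf (pmf_of_set S) = log 2 (card S)"
    unfolding entropy_pmf_def by simp
qed

lemma marg_two:
  fixes u v :: "nat \<Rightarrow> nat"
  assumes "u \<noteq> v"
  shows "marg (pmf_of_set {u, v}) A = pmf_of_set ((\<lambda>x. restrict x A) ` {u, v})"
proof (cases "restrict u A = restrict v A")
  case True
  have "marg (pmf_of_set {u, v}) A = map_pmf (\<lambda>_. restrict u A) (pmf_of_set {u, v})"
    unfolding marg_def by (rule map_pmf_cong) (auto simp: True)
  also have "\<dots> = return_pmf (restrict u A)" by (simp add: map_pmf_const)
  finally show ?thesis using True by (simp add: pmf_of_set_singleton)
next
  case False
  have "inj_on (\<lambda>x. restrict x A) {u, v}" using False by auto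
  then show ?thesis unfolding marg_def by (simp add: map_pmf_of_set_inj)
qed

lemma nondeg:
  assumes "2 \<le> size (snd K)" "pure K"
  shows "\<not> degenerate n K"
proof -
  obtain C M where K: "K = (C, M)" by (cases K)
  define u :: "nat \<Rightarrow> nat" where "u = (\<lambda>i. 0)"
  define v :: "nat \<Rightarrow> nat" where "v = (\<lambda>i. if i \<in> C then 0 else 1)"
  define p where "p = pmf_of_set {u, v}"
  have M: "\<And>Q. Q \<in># M \<Longrightarrow> Q \<noteq> {} \<and> Q \<inter> C = {}" using assms(2) K pure_def by auto
  have "M \<noteq> {#}" using assms(1) K by auto
  then obtain Q0 where Q0: "Q0 \<in># M" by blast
  then have "Q0 \<noteq> {}" "Q0 \<inter> C = {}" using M by auto
  then obtain i0 where "i0 \<in> Q0" "i0 \<notin> C" by blast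
  then have "u i0 \<noteq> v i0" unfolding u_def v_def by simp
  then have uv: "u \<noteq> v" by metis
  have img: "card ((\<lambda>x. restrict x A) ` {u, v}) = (if A \<subseteq> C then 1 else 2)" for A
  proof (cases "A \<subseteq> C")
    case True
    have "restrict u A = restrict v A"
    proof
      fix i show "restrict u A i = restrict v A i"
        using True unfolding u_def v_def restrict_def by auto
    qed
    then show ?thesis using True by simp
  next
    case False
    then obtain i where i: "i \<in> A" "i \<notin> C" by blast
    have "restrict u A i \<noteq> restrict v A i"
      using i unfolding u_def v_def restrict_def by simp
    then have "restrict u A \<noteq> restrict v A" by metis
    then show ?thesis using False by simp
  qed
  have Hp: "H p A = (if A \<subseteq> C then 0 else 1)" for A
  proof -
    have "H p A = log 2 (card ((\<lambda>x. restrict x A) ` {u, v}))"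
      unfolding H_def p_def marg_two[OF uv] by (rule ent_pmf_of_set(1)) auto
    then show ?thesis using img[of A] by simp
  qed
  have adm: "admissible n p"
  proof -
    have "finite_entropy (marg p A)" for A
      unfolding p_def marg_two[OF uv] by (rule ent_pmf_of_set(2)) auto
    then show ?thesis unfolding admissible_def by blast
  qed
  have hc: "Hc p Q C = 1" if "Q \<in># M" for Q
  proof -
    have "\<not> Q \<union> C \<subseteq> C" using M[OF that] by blast
    then show ?thesis by (simp add: Hc_def Hp)
  qed
  have hu: "Hc p (\<Union>Q\<in>set_mset M. Q) C = 1"
  proof -
    have "\<not> (\<Union>Q\<in>set_mset M. Q) \<union> C \<subseteq> C" using M[OF Q0] Q0 by blast
    then show ?thesis by (simp add: Hc_def Hp)
  qed
  have "(\<Sum>Q\<in>#M. Hc p Q C) = (\<Sum>Q\<in>#M. 1)"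
    using image_mset_cong[of M "\<lambda>Q. Hc p Q C" "\<lambda>_. 1"] hc by simp
  also have "\<dots> = real (size M)" by (simp add: sum_mset_constant)
  finally have "\<not> valid p K" using assms(1) K hu by (simp add: valid_def)
  then show ?thesis using adm degenerate_def by blast
qed

lemma deg_small:
  assumes "size (snd K) \<le> 1"
  shows "degenerate n K"
proof -
  obtain C M where K: "K = (C, M)" by (cases K)
  have "M = {#} \<or> (\<exists>Q. M = {#Q#})" using assms K
    by (cases M) (auto simp: size_eq_0_iff_empty)
  then show ?thesis unfolding degenerate_def valid_def K
    by (auto simp: Hc_def)
qed

lemma IK_sub:
  assumes "pure K"
  shows "IK K \<inter> fst K = {}"
proof -
  have "i \<notin> fst K" if "i \<in> IK K" for i
  proof -
    from that have "size (filter_mset (\<lambda>Q. i \<in> Q) (snd K)) \<ge> 2"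
      by (auto simp: IK_def split: if_splits)
    have "filter_mset (\<lambda>Q. i \<in> Q) (snd K) \<noteq> {#}"
    proof
      assume "filter_mset (\<lambda>Q. i \<in> Q) (snd K) = {#}"
      then have "size (filter_mset (\<lambda>Q. i \<in> Q) (snd K)) = 0" by simp
      then show False using \<open>size (filter_mset (\<lambda>Q. i \<in> Q) (snd K)) \<ge> 2\<close> by linarith
    qed
    then obtain Q where "Q \<in># filter_mset (\<lambda>Q. i \<in> Q) (snd K)"
      by (meson multiset_nonemptyE)
    then have "Q \<in># snd K" "i \<in> Q" by auto
    then show ?thesis using assms pure_def by auto
  qed
  then show ?thesis by auto
qed

lemma PK_pure:
  assumes "pure K" "P \<in># PK K"
  shows "P \<noteq> {} \<and> P \<inter> fst K = {}"
  using assms unfolding PK_def pure_def by auto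

lemma PK_empty:
  assumes "pure K" "IK K = {}"
  shows "PK K = snd K"
proof -
  have "filter_mset (\<lambda>P. P \<noteq> {}) (snd K) = snd K"
    using assms(1) unfolding pure_def by (simp add: filter_mset_eq_conv)
  then show ?thesis unfolding PK_def assms(2) by simp
qed

theorem mainTheorem20:
  fixes n :: nat and K :: cmi
  assumes "cmi_on n K" and "pure K"
  shows "degenerate n K \<longleftrightarrow> is_degenerate_symbol n (can K)"
proof (cases "size (snd K) \<le> 1")
  case True
  then show ?thesis using deg_small by (simp add: can_def is_degenerate_symbol_def Let_def)
next
  case False
  then have s2: "2 \<le> size (snd K)" by simp
  have l: "\<not> degenerate n K" using nondeg[OF s2 assms(2)] .
  have I: "IK K \<inter> fst K = {}" using IK_sub[OF assms(2)] .
  have P: "\<And>P. P \<in># PK K \<Longrightarrow> P \<noteq> {} \<and> P \<inter> fst K = {}" using PK_pure[OF assms(2)] by blast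
  have "\<not> is_degenerate_symbol n (can K)"
  proof (cases "IK K \<noteq> {} \<and> size (PK K) \<le> 1")
    case True
    then have "can K = Some (fst K, {#IK K, IK K#})" using False by (simp add: can_def Let_def)
    moreover have "\<not> degenerate n (fst K, {#IK K, IK K#})"
      by (rule nondeg) (use True I in \<open>auto simp: pure_def\<close>)
    ultimately show ?thesis by (simp add: is_degenerate_symbol_def)
  next
    case F2: False
    show ?thesis
    proof (cases "IK K = {}")
      case True
      then have "can K = Some (fst K, PK K)" using False by (simp add: can_def Let_def)
      moreover have "\<not> degenerate n (fst K, PK K)"
        by (rule nondeg) (use True P s2 PK_empty[OF assms(2) True] in \<open>auto simp: pure_def\<close>)
      ultimately show ?thesis by (simp add: is_degenerate_symbol_def)
    next
      case F3: False
      then have "can K = Some (fst K, {#IK K, IK K#} + PK K)" using False F2 by (simp add: can_def Let_def)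
      moreover have "\<not> degenerate n (fst K, {#IK K, IK K#} + PK K)"
        by (rule nondeg) (use F3 P I in \<open>auto simp: pure_def\<close>)
      ultimately show ?thesis by (simp add: is_degenerate_symbol_def)
    qed
  qed
  then show ?thesis using l by simp
qed

end
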